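(* Let $C_i, C_j, C_k$ be three pairwise disjoint closed circular discs in $\mathbb{R}^2$ with non-collinear centers $c_i,c_j,c_k$, and let $F$ be their feasible region. Then every point $q\in F$ illuminates every point of each of the three objective arcs: for every point $p$ on the objective arc of any of the three discs, the open segment from $q$ to $p$ does not meet the interior of $C_i$, $C_j$ or $C_k$.
   Context: For two disjoint closed discs $C_a, C_b$ with centers $c_a,c_b$, let $p_a, p_b$ be the points where the segment $\overline{c_ac_b}$ meets the boundary circles of $C_a$ and $C_b$ respectively, and let $l_a, l_b$ be the lines through $p_a$, $p_b$ perpendicular to $\overline{c_ac_b}$. The slab $S_{a,b}$ is the closed region between the parallel lines $l_a$ and $l_b$. For three pairwise disjoint discs $C_i,C_j,C_k$, the feasible region is $S_{i,j}\cap S_{j,k}\cap S_{i,k}$. Objective arcs: on each disc, say $C_i$, the edges $\overline{c_ic_j}$ and $\overline{c_ic_k}$ of the triangle $c_ic_jc_k$ meet the boundary circle of $C_i$ in two points; the objective arc of $C_i$ is the arc of the boundary circle of $C_i$ with these two points as endpoints whose length is less than half the circumference (the arc facing the interior of the triangle). Objective arcs of $C_j$, $C_k$ are defined analogously. *)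

theory Defs
  imports "HOL-Analysis.Analysis"
begin

type_synonym point = "real^2"

definition near_point :: "point \<Rightarrow> real \<Rightarrow> point \<Rightarrow> point" where
  "near_point ca ra cb = ca + (ra / norm (cb - ca)) *\<^sub>R (cb - ca)"

text \<open>Slab S_{a,b}: closed region between the lines through p_a and p_b
  perpendicular to the segment c_a c_b.\<close>
definition slab :: "point \<Rightarrow> real \<Rightarrow> point \<Rightarrow> real \<Rightarrow> point set" where
  "slab ca ra cb rb =
     {x. (x - near_point ca ra cb) \<bullet> (cb - ca) \<ge> 0 \<and>
         (x - near_point cb rb ca) \<bullet> (cb - ca) \<le> 0}"

definition feasible_region ::
  "point \<Rightarrow> real \<Rightarrow> point \<Rightarrow> real \<Rightarrow> point \<Rightarrow> real \<Rightarrow> point set" where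
  "feasible_region ci ri cj rj ck rk =
     slab ci ri cj rj \<inter> slab cj rj ck rk \<inter> slab ci ri ck rk"

text \<open>Minor (shorter) arc of the circle sphere c r between two points e1, e2 of that
  circle, in the non-antipodal case: the points of the circle lying in the closed
  convex angular sector at c spanned by e1 - c and e2 - c.\<close>
definition minor_arc :: "point \<Rightarrow> real \<Rightarrow> point \<Rightarrow> point \<Rightarrow> point set" where
  "minor_arc c r e1 e2 =
     sphere c r \<inter> {c + a *\<^sub>R (e1 - c) + b *\<^sub>R (e2 - c) | a b. a \<ge> 0 \<and> b \<ge> 0}"

definition objective_arc :: "point \<Rightarrow> real \<Rightarrow> point \<Rightarrow> point \<Rightarrow> point set" where
  "objective_arc ci ri cj ck = minor_arc ci ri (near_point ci ri cj) (near_point ci ri ck)"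

end

theory Submission
  imports Defs
begin

lemma seg_avoid:
  fixes q p c v :: "real^2"
  assumes "v \<noteq> 0" "(q - c) \<bullet> v \<ge> r * norm v" "(p - c) \<bullet> v \<ge> r * norm v"
  shows "open_segment q p \<inter> ball c r = {}"
proof (rule ccontr)
  assume "open_segment q p \<inter> ball c r \<noteq> {}"
  then obtain x where x: "x \<in> open_segment q p" "x \<in> ball c r" by blast
  then obtain u where u0: "0 < u" "u < 1" "x = (1 - u) *\<^sub>R q + u *\<^sub>R p"
    by (auto simp: in_segment)
  hence u: "0 \<le> u" "u \<le> 1" "x = (1 - u) *\<^sub>R q + u *\<^sub>R p" by auto
  have "x - c = (1 - u) *\<^sub>R (q - c) + u *\<^sub>R (p - c)" using u by (simp add: algebra_simps)
  hence "(x - c) \<bullet> v = (1 - u) * ((q - c) \<bullet> v) + u * ((p - c) \<bullet> v)"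
    by (simp add: inner_add_left)
  also have "\<dots> \<ge> (1 - u) * (r * norm v) + u * (r * norm v)"
    using assms u by (intro add_mono mult_left_mono) auto
  finally have A: "(x - c) \<bullet> v \<ge> r * norm v" by (simp add: algebra_simps)
  have "(x - c) \<bullet> v \<le> norm (x - c) * norm v" using norm_cauchy_schwarz by blast
  also have "\<dots> < r * norm v" using x(2) assms(1)
    by (intro mult_strict_right_mono) (auto simp: dist_norm norm_minus_commute)
  finally show False using A by simp
qed

lemma slab_unfold:
  assumes "x \<in> slab ca ra cb rb"
  shows "(x - ca) \<bullet> (cb - ca) \<ge> ra * norm (cb - ca)"
        "(x - cb) \<bullet> (ca - cb) \<ge> rb * norm (ca - cb)"
proof -
  have e: "(cb - ca) \<bullet> (cb - ca) = norm (cb - ca) * norm (cb - ca)"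
    by (simp add: power2_eq_square[symmetric] power2_norm_eq_inner)
  have n: "norm (ca - cb) = norm (cb - ca)" by (rule norm_minus_commute)
  from assms have 1: "(x - near_point ca ra cb) \<bullet> (cb - ca) \<ge> 0"
    and 2: "(x - near_point cb rb ca) \<bullet> (cb - ca) \<le> 0" by (auto simp: slab_def)
  show "(x - ca) \<bullet> (cb - ca) \<ge> ra * norm (cb - ca)"
  proof (cases "norm (cb - ca) = 0")
    case True then show ?thesis by simp
  next
    case False
    have np: "(near_point ca ra cb - ca) \<bullet> (cb - ca) = ra * norm (cb - ca)"
      using False unfolding near_point_def by (simp add: e)
    have "x - near_point ca ra cb = (x - ca) - (near_point ca ra cb - ca)" by simp
    hence "(x - near_point ca ra cb) \<bullet> (cb - ca) = ((x - ca) - (near_point ca ra cb - ca)) \<bullet> (cb - ca)" by simp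
    also have "\<dots> = (x - ca) \<bullet> (cb - ca) - (near_point ca ra cb - ca) \<bullet> (cb - ca)" by (rule inner_diff_left)
    finally have "(x - near_point ca ra cb) \<bullet> (cb - ca) = (x - ca) \<bullet> (cb - ca) - ra * norm (cb - ca)"
      using np by simp
    then show ?thesis using 1 by simp
  qed
  show "(x - cb) \<bullet> (ca - cb) \<ge> rb * norm (ca - cb)"
  proof (cases "norm (cb - ca) = 0")
    case True then show ?thesis using n by simp
  next
    case False
    have e2: "(ca - cb) \<bullet> (cb - ca) = - (norm (cb - ca) * norm (cb - ca))"
      using e by (metis inner_minus_left minus_diff_eq)
    have e3: "(ca - cb) \<bullet> (ca - cb) = norm (ca - cb) * norm (ca - cb)"
      by (simp add: power2_eq_square[symmetric] power2_norm_eq_inner)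
    have np: "(near_point cb rb ca - cb) \<bullet> (ca - cb) = rb * norm (ca - cb)"
      using False n unfolding near_point_def by (simp add: e3)
    have "x - near_point cb rb ca = (x - cb) - (near_point cb rb ca - cb)" by simp
    hence "(x - near_point cb rb ca) \<bullet> (ca - cb) = ((x - cb) - (near_point cb rb ca - cb)) \<bullet> (ca - cb)" by simp
    also have "\<dots> = (x - cb) \<bullet> (ca - cb) - (near_point cb rb ca - cb) \<bullet> (ca - cb)" by (rule inner_diff_left)
    finally have "(x - near_point cb rb ca) \<bullet> (ca - cb) = (x - cb) \<bullet> (ca - cb) - rb * norm (ca - cb)"
      using np by simp
    moreover have "(x - near_point cb rb ca) \<bullet> (cb - ca) = - ((x - near_point cb rb ca) \<bullet> (ca - cb))"
      by (metis inner_minus_right minus_diff_eq)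
    ultimately have "(x - near_point cb rb ca) \<bullet> (cb - ca) = - ((x - cb) \<bullet> (ca - cb) - rb * norm (cb - ca))"
      using n by simp
    then show ?thesis using 2 n by simp
  qed
qed

lemma disj_dist:
  fixes ca cb :: "real^2"
  assumes "cball ca ra \<inter> cball cb rb = {}" "ra > 0" "rb > 0"
  shows "norm (ca - cb) > ra + rb"
proof (rule ccontr)
  assume "\<not> ?thesis"
  hence d: "norm (ca - cb) \<le> ra + rb" by simp
  define t where "t = ra / (ra + rb)"
  define x where "x = ca + t *\<^sub>R (cb - ca)"
  have t: "0 \<le> t" "t \<le> 1" using assms by (auto simp: t_def)
  have "dist ca x = t * norm (cb - ca)" using t by (simp add: x_def dist_norm)
  also have "\<dots> \<le> t * (ra + rb)" using d t by (simp add: norm_minus_commute mult_left_mono)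
  also have "\<dots> = ra" using assms by (simp add: t_def)
  finally have 1: "x \<in> cball ca ra" by simp
  have "x - cb = (1 - t) *\<^sub>R (ca - cb)" by (simp add: x_def algebra_simps)
  hence "norm (x - cb) = (1 - t) * norm (ca - cb)" using t by simp
  hence "dist cb x = (1 - t) * norm (ca - cb)" by (simp add: dist_norm norm_minus_commute)
  also have "\<dots> \<le> (1 - t) * (ra + rb)" using d t by (simp add: mult_left_mono)
  also have "\<dots> = rb" using assms by (simp add: t_def field_simps)
  finally have 2: "x \<in> cball cb rb" by simp
  show False using 1 2 assms(1) by blast
qed

lemma far_disc:
  fixes ca cb p :: "real^2"
  assumes "p \<in> cball ca ra" "norm (ca - cb) > ra + rb"
  shows "(p - cb) \<bullet> (ca - cb) \<ge> rb * norm (ca - cb)"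
proof -
  have e: "(ca - cb) \<bullet> (ca - cb) = norm (ca - cb) * norm (ca - cb)"
    by (simp add: power2_eq_square[symmetric] power2_norm_eq_inner)
  have "p - cb = (ca - cb) + (p - ca)" by simp
  hence "(p - cb) \<bullet> (ca - cb) = ((ca - cb) + (p - ca)) \<bullet> (ca - cb)" by simp
  hence "(p - cb) \<bullet> (ca - cb) = norm (ca - cb) * norm (ca - cb) + (p - ca) \<bullet> (ca - cb)"
    by (simp only: inner_add_left e)
  moreover have "(p - ca) \<bullet> (ca - cb) \<ge> - (norm (p - ca) * norm (ca - cb))"
    using Cauchy_Schwarz_ineq2[of "p - ca" "ca - cb"] by linarith
  moreover have "norm (p - ca) * norm (ca - cb) \<le> ra * norm (ca - cb)"
    using assms(1) by (intro mult_right_mono) (auto simp: dist_norm norm_minus_commute)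
  moreover have "norm (ca - cb) * norm (ca - cb) - ra * norm (ca - cb) \<ge> rb * norm (ca - cb)"
  proof -
    have "norm (ca - cb) - ra \<ge> rb" using assms(2) by simp
    hence "norm (ca - cb) * (norm (ca - cb) - ra) \<ge> norm (ca - cb) * rb"
      by (intro mult_left_mono) auto
    thus ?thesis by (simp add: algebra_simps)
  qed
  ultimately show ?thesis by linarith
qed

lemma arc_prop:
  fixes ca cb cc p q :: "real^2"
  assumes "p \<in> objective_arc ca ra cb cc" "ra > 0" "ca \<noteq> cb" "ca \<noteq> cc"
    "(q - ca) \<bullet> (cb - ca) \<ge> ra * norm (cb - ca)"
    "(q - ca) \<bullet> (cc - ca) \<ge> ra * norm (cc - ca)"
  shows "(q - ca) \<bullet> (p - ca) \<ge> ra * norm (p - ca)" "(p - ca) \<bullet> (p - ca) \<ge> ra * norm (p - ca)"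
    "p - ca \<noteq> 0" "p \<in> cball ca ra"
proof -
  define d1 where "d1 = norm (cb - ca)"
  define d2 where "d2 = norm (cc - ca)"
  have d: "d1 > 0" "d2 > 0" using assms by (auto simp: d1_def d2_def)
  have P1: "p \<in> sphere ca ra" and P2: "p \<in> {ca + a *\<^sub>R (near_point ca ra cb - ca) + b *\<^sub>R (near_point ca ra cc - ca) | a b. a \<ge> 0 \<and> b \<ge> 0}"
    using assms(1) unfolding objective_arc_def minor_arc_def by blast+
  from P2 obtain a b where ab0: "a \<ge> 0" "b \<ge> 0"
    "p = ca + a *\<^sub>R (near_point ca ra cb - ca) + b *\<^sub>R (near_point ca ra cc - ca)" by blast
  have "norm (p - ca) = ra" using P1 by (simp add: dist_norm norm_minus_commute)
  note ab = ab0(1,2) this ab0(3)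
  have pc: "p - ca = (a * ra / d1) *\<^sub>R (cb - ca) + (b * ra / d2) *\<^sub>R (cc - ca)"
    using ab(4) by (simp add: near_point_def d1_def d2_def)
  have "ra = norm (p - ca)" using ab by simp
  also have "\<dots> \<le> norm ((a * ra / d1) *\<^sub>R (cb - ca)) + norm ((b * ra / d2) *\<^sub>R (cc - ca))"
    unfolding pc by (rule norm_triangle_ineq)
  also have "\<dots> = a * ra + b * ra" using d ab assms(2) by (simp add: d1_def d2_def)
  finally have s: "ra \<le> (a + b) * ra" by (simp add: algebra_simps)
  hence ab1: "a + b \<ge> 1" using assms(2) by simp
  have "(q - ca) \<bullet> (p - ca) = (a * ra / d1) * ((q - ca) \<bullet> (cb - ca)) + (b * ra / d2) * ((q - ca) \<bullet> (cc - ca))"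
    unfolding pc by (simp add: inner_add_right)
  also have "\<dots> \<ge> (a * ra / d1) * (ra * d1) + (b * ra / d2) * (ra * d2)"
    using assms(2,5,6) ab d by (intro add_mono mult_left_mono) (auto simp: d1_def d2_def)
  finally have "(q - ca) \<bullet> (p - ca) \<ge> (a + b) * (ra * ra)" using d by (simp add: algebra_simps)
  moreover have "(a + b) * (ra * ra) \<ge> ra * ra" using ab1 assms(2) by simp
  ultimately show "(q - ca) \<bullet> (p - ca) \<ge> ra * norm (p - ca)" using ab(3) by simp
  show "(p - ca) \<bullet> (p - ca) \<ge> ra * norm (p - ca)"
  proof -
    have "(p - ca) \<bullet> (p - ca) = norm (p - ca) ^ 2" by (simp add: power2_norm_eq_inner)
    thus ?thesis using ab(3) by (simp add: power2_eq_square)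
  qed
  show "p - ca \<noteq> 0" using ab(3) assms(2) by auto
  show "p \<in> cball ca ra" using ab(3) by (simp add: dist_norm norm_minus_commute)
qed

theorem theorem1:
  fixes ci cj ck :: "real^2" and ri rj rk :: real
  assumes "ri > 0" "rj > 0" "rk > 0"
    and "cball ci ri \<inter> cball cj rj = {}"
    and "cball cj rj \<inter> cball ck rk = {}"
    and "cball ci ri \<inter> cball ck rk = {}"
    and "\<not> collinear {ci, cj, ck}"
    and "q \<in> feasible_region ci ri cj rj ck rk"
    and "p \<in> objective_arc ci ri cj ck \<union> objective_arc cj rj ci ck \<union> objective_arc ck rk ci cj"
  shows "open_segment q p \<inter> ball ci ri = {} \<and>
         open_segment q p \<inter> ball cj rj = {} \<and>
         open_segment q p \<inter> ball ck rk = {}"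
proof -
  have dij: "norm (ci - cj) > ri + rj" using disj_dist assms(1,2,4) by blast
  have djk: "norm (cj - ck) > rj + rk" using disj_dist assms(2,3,5) by blast
  have dik: "norm (ci - ck) > ri + rk" using disj_dist assms(1,3,6) by blast
  have dji: "norm (cj - ci) > rj + ri" using dij by (simp add: norm_minus_commute add.commute)
  have dkj: "norm (ck - cj) > rk + rj" using djk by (simp add: norm_minus_commute add.commute)
  have dki: "norm (ck - ci) > rk + ri" using dik by (simp add: norm_minus_commute add.commute)
  have ne: "ci \<noteq> cj" "cj \<noteq> ck" "ci \<noteq> ck" "cj \<noteq> ci" "ck \<noteq> cj" "ck \<noteq> ci"
    using dij djk dik assms(1-3) by auto
  have nz: "ci - cj \<noteq> 0" "cj - ck \<noteq> 0" "ci - ck \<noteq> 0" "cj - ci \<noteq> 0" "ck - cj \<noteq> 0" "ck - ci \<noteq> 0"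
    using ne by auto
  from assms(8) have s1: "q \<in> slab ci ri cj rj" and s2: "q \<in> slab cj rj ck rk"
    and s3: "q \<in> slab ci ri ck rk" by (auto simp: feasible_region_def)
  note S = slab_unfold[OF s1] slab_unfold[OF s2] slab_unfold[OF s3]
  from assms(9) consider "p \<in> objective_arc ci ri cj ck" | "p \<in> objective_arc cj rj ci ck"
    | "p \<in> objective_arc ck rk ci cj" by blast
  then show ?thesis
  proof cases
    case 1
    note A = arc_prop[OF 1 assms(1) ne(1) ne(3) S(1) S(5)]
    show ?thesis using seg_avoid[OF A(3) A(1) A(2)]
      seg_avoid[OF nz(1) S(2) far_disc[OF A(4) dij]]
      seg_avoid[OF nz(3) S(6) far_disc[OF A(4) dik]] by blast
  next
    case 2
    note A = arc_prop[OF 2 assms(2) ne(4) ne(2) S(2) S(3)]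
    show ?thesis using seg_avoid[OF A(3) A(1) A(2)]
      seg_avoid[OF nz(4) S(1) far_disc[OF A(4) dji]]
      seg_avoid[OF nz(2) S(4) far_disc[OF A(4) djk]] by blast
  next
    case 3
    note A = arc_prop[OF 3 assms(3) ne(6) ne(5) S(6) S(4)]
    show ?thesis using seg_avoid[OF A(3) A(1) A(2)]
      seg_avoid[OF nz(6) S(5) far_disc[OF A(4) dki]]
      seg_avoid[OF nz(5) S(3) far_disc[OF A(4) dkj]] by blast
  qed
qed

end
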